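(* Let $P:\mathcal{C}^{\mathrm{op}}\to\mathbf{Pos}$ be a universal slat-doctrine and suppose $\mathcal{C}$ has exponents. Then the existential completion $P^{ex}$ is both existential and universal.
   Context: A slat-doctrine is a functor $P:\mathcal{C}^{\mathrm{op}}\to\mathbf{Pos}$ where $\mathcal{C}$ has finite products; for $f:X\to Y$, $P_f:P(Y)\to P(X)$ is reindexing. $P$ is existential (resp. universal) if for all objects $A_1,A_2$ and $i=1,2$ the map $P_{\mathrm{pr}_i}:P(A_i)\to P(A_1\times A_2)$ has a left adjoint $\exists_{\mathrm{pr}_i}$ (resp. a right adjoint $\forall_{\mathrm{pr}_i}$) and these satisfy the Beck–Chevalley condition: for every pullback square with projections $\mathrm{pr}':X'\to A'$, $\mathrm{pr}:X\to A$ and arrows $f:A'\to A$, $f':X'\to X$ with $\mathrm{pr}\, f'=f\,\mathrm{pr}'$, one has $\exists_{\mathrm{pr}'}P_{f'}=P_f\exists_{\mathrm{pr}}$ (resp. $\forall_{\mathrm{pr}'}P_{f'}=P_f\forall_{\mathrm{pr}}$). Existential completion: $P^{ex}(A)$ is the poset (reflection of the preorder) of triples $(A,B,\alpha)$ with $\alpha\in P(A\times B)$, where $(A,B,\alpha)\le(A,C,\beta)$ iff there is $f:A\times B\to C$ with $\alpha\le P_{\langle\mathrm{pr}_A,f\rangle}(\beta)$; for $f:A\to C$, $P^{ex}_f(C,D,\gamma)=(A,D,P_{f\times 1_D}(\gamma))$. *)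

theory Defs
  imports Main
begin

record ('o,'a) cat =
  Obj  :: "'o set"
  Arr  :: "'a set"
  Dom  :: "'a \<Rightarrow> 'o"
  Cod  :: "'a \<Rightarrow> 'o"
  Comp :: "'a \<Rightarrow> 'a \<Rightarrow> 'a"   (* Comp g f = g o f *)
  Id   :: "'o \<Rightarrow> 'a"

definition Hom :: "('o,'a) cat \<Rightarrow> 'o \<Rightarrow> 'o \<Rightarrow> 'a set" where
  "Hom C X Y = {f \<in> Arr C. Dom C f = X \<and> Cod C f = Y}"

definition category :: "('o,'a) cat \<Rightarrow> bool" where
  "category C \<longleftrightarrow>
     (\<forall>f\<in>Arr C. Dom C f \<in> Obj C \<and> Cod C f \<in> Obj C) \<and>
     (\<forall>X\<in>Obj C. Id C X \<in> Hom C X X) \<and>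
     (\<forall>f\<in>Arr C. \<forall>g\<in>Arr C. Cod C f = Dom C g \<longrightarrow> Comp C g f \<in> Hom C (Dom C f) (Cod C g)) \<and>
     (\<forall>f\<in>Arr C. Comp C f (Id C (Dom C f)) = f \<and> Comp C (Id C (Cod C f)) f = f) \<and>
     (\<forall>f\<in>Arr C. \<forall>g\<in>Arr C. \<forall>h\<in>Arr C. Cod C f = Dom C g \<longrightarrow> Cod C g = Dom C h \<longrightarrow>
        Comp C h (Comp C g f) = Comp C (Comp C h g) f)"

record ('o,'a) prods =
  Prod :: "'o \<Rightarrow> 'o \<Rightarrow> 'o"
  Pr1  :: "'o \<Rightarrow> 'o \<Rightarrow> 'a"
  Pr2  :: "'o \<Rightarrow> 'o \<Rightarrow> 'a"
  Pair :: "'a \<Rightarrow> 'a \<Rightarrow> 'a"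
  Term :: "'o"
  Bang :: "'o \<Rightarrow> 'a"

definition finite_products :: "('o,'a) cat \<Rightarrow> ('o,'a) prods \<Rightarrow> bool" where
  "finite_products C Pr \<longleftrightarrow>
     (\<forall>A\<in>Obj C. \<forall>B\<in>Obj C.
        Prod Pr A B \<in> Obj C \<and>
        Pr1 Pr A B \<in> Hom C (Prod Pr A B) A \<and>
        Pr2 Pr A B \<in> Hom C (Prod Pr A B) B \<and>
        (\<forall>Z\<in>Obj C. \<forall>f\<in>Hom C Z A. \<forall>g\<in>Hom C Z B.
           Pair Pr f g \<in> Hom C Z (Prod Pr A B) \<and>
           Comp C (Pr1 Pr A B) (Pair Pr f g) = f \<and>
           Comp C (Pr2 Pr A B) (Pair Pr f g) = g \<and>
           (\<forall>h\<in>Hom C Z (Prod Pr A B).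
              Comp C (Pr1 Pr A B) h = f \<and> Comp C (Pr2 Pr A B) h = g \<longrightarrow> h = Pair Pr f g))) \<and>
     Term Pr \<in> Obj C \<and>
     (\<forall>X\<in>Obj C. Bang Pr X \<in> Hom C X (Term Pr) \<and> (\<forall>h\<in>Hom C X (Term Pr). h = Bang Pr X))"

definition times :: "('o,'a) cat \<Rightarrow> ('o,'a) prods \<Rightarrow> 'a \<Rightarrow> 'a \<Rightarrow> 'a" where
  "times C Pr f g =
     Pair Pr (Comp C f (Pr1 Pr (Dom C f) (Dom C g))) (Comp C g (Pr2 Pr (Dom C f) (Dom C g)))"

definition has_exponents :: "('o,'a) cat \<Rightarrow> ('o,'a) prods \<Rightarrow> bool" where
  "has_exponents C Pr \<longleftrightarrow>
     (\<forall>A\<in>Obj C. \<forall>B\<in>Obj C. \<exists>E\<in>Obj C. \<exists>ev\<in>Hom C (Prod Pr E A) B.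
        \<forall>Z\<in>Obj C. \<forall>g\<in>Hom C (Prod Pr Z A) B.
          \<exists>!h. h \<in> Hom C Z E \<and> Comp C ev (times C Pr h (Id C A)) = g)"

definition pullback :: "('o,'a) cat \<Rightarrow> 'a \<Rightarrow> 'a \<Rightarrow> 'a \<Rightarrow> 'a \<Rightarrow> bool" where
  \<comment> \<open>square  p' : X' \<rightarrow> A',  f' : X' \<rightarrow> X,  p : X \<rightarrow> A,  f : A' \<rightarrow> A\<close>
  "pullback C p' f' p f \<longleftrightarrow>
     Comp C p f' = Comp C f p' \<and>
     (\<forall>Z\<in>Obj C. \<forall>g\<in>Hom C Z (Cod C p'). \<forall>h\<in>Hom C Z (Dom C p).
        Comp C f g = Comp C p h \<longrightarrow>
        (\<exists>!k. k \<in> Hom C Z (Dom C p') \<and> Comp C p' k = g \<and> Comp C f' k = h))"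

definition is_proj :: "('o,'a) cat \<Rightarrow> ('o,'a) prods \<Rightarrow> 'a \<Rightarrow> 'o \<Rightarrow> 'o \<Rightarrow> bool" where
  "is_proj C Pr p X A \<longleftrightarrow>
     (\<exists>A1\<in>Obj C. \<exists>A2\<in>Obj C. X = Prod Pr A1 A2 \<and>
        ((A = A1 \<and> p = Pr1 Pr A1 A2) \<or> (A = A2 \<and> p = Pr2 Pr A1 A2)))"

record ('o,'a,'x) doctrine =
  PO :: "'o \<Rightarrow> 'x set"
  PL :: "'o \<Rightarrow> 'x \<Rightarrow> 'x \<Rightarrow> bool"
  PM :: "'a \<Rightarrow> 'x \<Rightarrow> 'x"              (* reindexing P_f : P(Cod f) \<rightarrow> P(Dom f) *)

definition doctrine :: "('o,'a) cat \<Rightarrow> ('o,'a,'x) doctrine \<Rightarrow> bool" where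
  "doctrine C D \<longleftrightarrow>
     (\<forall>A\<in>Obj C.
        (\<forall>x\<in>PO D A. PL D A x x) \<and>
        (\<forall>x\<in>PO D A. \<forall>y\<in>PO D A. PL D A x y \<and> PL D A y x \<longrightarrow> x = y) \<and>
        (\<forall>x\<in>PO D A. \<forall>y\<in>PO D A. \<forall>z\<in>PO D A. PL D A x y \<and> PL D A y z \<longrightarrow> PL D A x z)) \<and>
     (\<forall>f\<in>Arr C. \<forall>x\<in>PO D (Cod C f). PM D f x \<in> PO D (Dom C f)) \<and>
     (\<forall>f\<in>Arr C. \<forall>x\<in>PO D (Cod C f). \<forall>y\<in>PO D (Cod C f).
        PL D (Cod C f) x y \<longrightarrow> PL D (Dom C f) (PM D f x) (PM D f y)) \<and>
     (\<forall>A\<in>Obj C. \<forall>x\<in>PO D A. PM D (Id C A) x = x) \<and>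
     (\<forall>f\<in>Arr C. \<forall>g\<in>Arr C. Cod C f = Dom C g \<longrightarrow>
        (\<forall>x\<in>PO D (Cod C g). PM D (Comp C g f) x = PM D f (PM D g x)))"

definition is_left_adj :: "('o,'a,'x) doctrine \<Rightarrow> 'a \<Rightarrow> 'o \<Rightarrow> 'o \<Rightarrow> ('x \<Rightarrow> 'x) \<Rightarrow> bool" where
  "is_left_adj D p X A L \<longleftrightarrow>
     (\<forall>x\<in>PO D X. L x \<in> PO D A) \<and>
     (\<forall>x\<in>PO D X. \<forall>a\<in>PO D A. PL D A (L x) a \<longleftrightarrow> PL D X x (PM D p a))"

definition is_right_adj :: "('o,'a,'x) doctrine \<Rightarrow> 'a \<Rightarrow> 'o \<Rightarrow> 'o \<Rightarrow> ('x \<Rightarrow> 'x) \<Rightarrow> bool" where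
  "is_right_adj D p X A R \<longleftrightarrow>
     (\<forall>x\<in>PO D X. R x \<in> PO D A) \<and>
     (\<forall>x\<in>PO D X. \<forall>a\<in>PO D A. PL D X (PM D p a) x \<longleftrightarrow> PL D A a (R x))"

definition existential :: "('o,'a) cat \<Rightarrow> ('o,'a) prods \<Rightarrow> ('o,'a,'x) doctrine \<Rightarrow> bool" where
  "existential C Pr D \<longleftrightarrow>
     (\<exists>L :: 'a \<Rightarrow> 'x \<Rightarrow> 'x.
        (\<forall>p X A. is_proj C Pr p X A \<longrightarrow> is_left_adj D p X A (L p)) \<and>
        (\<forall>p X A p' X' A' f f'.
           is_proj C Pr p X A \<and> is_proj C Pr p' X' A' \<and>
           f \<in> Hom C A' A \<and> f' \<in> Hom C X' X \<and> pullback C p' f' p f \<longrightarrow>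
           (\<forall>x\<in>PO D X. L p' (PM D f' x) = PM D f (L p x))))"

definition universal :: "('o,'a) cat \<Rightarrow> ('o,'a) prods \<Rightarrow> ('o,'a,'x) doctrine \<Rightarrow> bool" where
  "universal C Pr D \<longleftrightarrow>
     (\<exists>R :: 'a \<Rightarrow> 'x \<Rightarrow> 'x.
        (\<forall>p X A. is_proj C Pr p X A \<longrightarrow> is_right_adj D p X A (R p)) \<and>
        (\<forall>p X A p' X' A' f f'.
           is_proj C Pr p X A \<and> is_proj C Pr p' X' A' \<and>
           f \<in> Hom C A' A \<and> f' \<in> Hom C X' X \<and> pullback C p' f' p f \<longrightarrow>
           (\<forall>x\<in>PO D X. R p' (PM D f' x) = PM D f (R p x))))"

text \<open>Triples (A,B,\<alpha>) with A fixed are represented as pairs (B,\<alpha>), \<alpha> \<in> P(A\<times>B).\<close>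
definition exT :: "('o,'a) cat \<Rightarrow> ('o,'a) prods \<Rightarrow> ('o,'a,'x) doctrine \<Rightarrow> 'o \<Rightarrow> ('o \<times> 'x) set" where
  "exT C Pr D A = {(B,\<alpha>). B \<in> Obj C \<and> \<alpha> \<in> PO D (Prod Pr A B)}"

definition exle :: "('o,'a) cat \<Rightarrow> ('o,'a) prods \<Rightarrow> ('o,'a,'x) doctrine \<Rightarrow> 'o \<Rightarrow> ('o \<times> 'x) \<Rightarrow> ('o \<times> 'x) \<Rightarrow> bool" where
  "exle C Pr D A u v \<longleftrightarrow>
     (\<exists>f\<in>Hom C (Prod Pr A (fst u)) (fst v).
        PL D (Prod Pr A (fst u)) (snd u) (PM D (Pair Pr (Pr1 Pr A (fst u)) f) (snd v)))"

definition exclass :: "('o,'a) cat \<Rightarrow> ('o,'a) prods \<Rightarrow> ('o,'a,'x) doctrine \<Rightarrow> 'o \<Rightarrow> ('o \<times> 'x) \<Rightarrow> ('o \<times> 'x) set" where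
  "exclass C Pr D A u = {v \<in> exT C Pr D A. exle C Pr D A u v \<and> exle C Pr D A v u}"

definition Pex :: "('o,'a) cat \<Rightarrow> ('o,'a) prods \<Rightarrow> ('o,'a,'x) doctrine \<Rightarrow> ('o,'a,('o \<times> 'x) set) doctrine" where
  "Pex C Pr D =
     \<lparr> PO = (\<lambda>A. exclass C Pr D A ` exT C Pr D A),
       PL = (\<lambda>A S T. \<exists>u\<in>S. \<exists>v\<in>T. exle C Pr D A u v),
       PM = (\<lambda>f S. \<Union>u\<in>S. exclass C Pr D (Dom C f)
                          (fst u, PM D (times C Pr f (Id C (fst u))) (snd u))) \<rparr>"

end

theory Submission
  imports Defs
begin

locale fpcat =
  fixes C :: "('o,'a) cat" and Pr :: "('o,'a) prods"
  assumes cat: "category C" and fps: "finite_products C Pr"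
begin

abbreviation ob where "ob X \<equiv> X \<in> Obj C"
abbreviation ar where "ar f \<equiv> f \<in> Arr C"
abbreviation dm where "dm \<equiv> Dom C"
abbreviation cd where "cd \<equiv> Cod C"
abbreviation cmp (infixr "\<cdot>" 80) where "g \<cdot> f \<equiv> Comp C g f"
abbreviation idn where "idn \<equiv> Id C"
abbreviation p1 where "p1 \<equiv> Pr1 Pr"
abbreviation p2 where "p2 \<equiv> Pr2 Pr"
abbreviation pr where "pr \<equiv> Pair Pr"
abbreviation prd where "prd \<equiv> Prod Pr"

lemma ar_ob[simp]: "ar f \<Longrightarrow> ob (dm f)" "ar f \<Longrightarrow> ob (cd f)"
  using cat unfolding category_def by auto

lemma id_ar[simp]: "ob X \<Longrightarrow> ar (idn X)" "ob X \<Longrightarrow> dm (idn X) = X" "ob X \<Longrightarrow> cd (idn X) = X"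
  using cat unfolding category_def Hom_def by auto

lemma comp_ar[simp]: "ar f \<Longrightarrow> ar g \<Longrightarrow> cd f = dm g \<Longrightarrow> ar (g \<cdot> f)"
  "ar f \<Longrightarrow> ar g \<Longrightarrow> cd f = dm g \<Longrightarrow> dm (g \<cdot> f) = dm f"
  "ar f \<Longrightarrow> ar g \<Longrightarrow> cd f = dm g \<Longrightarrow> cd (g \<cdot> f) = cd g"
  using cat unfolding category_def Hom_def by auto

lemma comp_id[simp]: "ar f \<Longrightarrow> dm f = X \<Longrightarrow> f \<cdot> idn X = f"
  "ar f \<Longrightarrow> cd f = Y \<Longrightarrow> idn Y \<cdot> f = f"
  using cat unfolding category_def Hom_def by auto

lemma assoc[simp]: "ar f \<Longrightarrow> ar g \<Longrightarrow> ar h \<Longrightarrow> cd f = dm g \<Longrightarrow> cd g = dm h \<Longrightarrow>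
   (h \<cdot> g) \<cdot> f = h \<cdot> (g \<cdot> f)"
  using cat unfolding category_def Hom_def by metis

lemma prd_ob[simp]: "ob A \<Longrightarrow> ob B \<Longrightarrow> ob (prd A B)"
  using fps unfolding finite_products_def by auto

lemma p1_ar[simp]: "ob A \<Longrightarrow> ob B \<Longrightarrow> ar (p1 A B)" "ob A \<Longrightarrow> ob B \<Longrightarrow> dm (p1 A B) = prd A B"
  "ob A \<Longrightarrow> ob B \<Longrightarrow> cd (p1 A B) = A"
  using fps unfolding finite_products_def Hom_def by auto

lemma p2_ar[simp]: "ob A \<Longrightarrow> ob B \<Longrightarrow> ar (p2 A B)" "ob A \<Longrightarrow> ob B \<Longrightarrow> dm (p2 A B) = prd A B"
  "ob A \<Longrightarrow> ob B \<Longrightarrow> cd (p2 A B) = B"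
  using fps unfolding finite_products_def Hom_def by auto

lemma fp_univ: "ob A \<Longrightarrow> ob B \<Longrightarrow> ob Z \<Longrightarrow> f \<in> Hom C Z A \<Longrightarrow> g \<in> Hom C Z B \<Longrightarrow>
  pr f g \<in> Hom C Z (prd A B) \<and> p1 A B \<cdot> pr f g = f \<and> p2 A B \<cdot> pr f g = g \<and>
  (\<forall>h\<in>Hom C Z (prd A B). p1 A B \<cdot> h = f \<and> p2 A B \<cdot> h = g \<longrightarrow> h = pr f g)"
  using fps unfolding finite_products_def by blast

lemma pair_all: "ar f \<Longrightarrow> ar g \<Longrightarrow> dm f = dm g \<Longrightarrow>
   ar (pr f g) \<and> dm (pr f g) = dm f \<and> cd (pr f g) = prd (cd f) (cd g) \<and>
   p1 (cd f) (cd g) \<cdot> pr f g = f \<and> p2 (cd f) (cd g) \<cdot> pr f g = g"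
proof -
  assume a: "ar f" "ar g" "dm f = dm g"
  note F = fp_univ[of "cd f" "cd g" "dm f" f g]
  have "pr f g \<in> Hom C (dm f) (prd (cd f) (cd g)) \<and>
     p1 (cd f) (cd g) \<cdot> pr f g = f \<and> p2 (cd f) (cd g) \<cdot> pr f g = g"
    using F a unfolding Hom_def by auto
  thus ?thesis unfolding Hom_def by auto
qed

lemma pair_ar[simp]: "ar f \<Longrightarrow> ar g \<Longrightarrow> dm f = dm g \<Longrightarrow> ar (pr f g)"
  "ar f \<Longrightarrow> ar g \<Longrightarrow> dm f = dm g \<Longrightarrow> dm (pr f g) = dm f"
  "ar f \<Longrightarrow> ar g \<Longrightarrow> dm f = dm g \<Longrightarrow> cd (pr f g) = prd (cd f) (cd g)"
  using pair_all by auto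

lemma p_pair[simp]: "ar f \<Longrightarrow> ar g \<Longrightarrow> dm f = dm g \<Longrightarrow> cd f = A \<Longrightarrow> cd g = B \<Longrightarrow> p1 A B \<cdot> pr f g = f"
  "ar f \<Longrightarrow> ar g \<Longrightarrow> dm f = dm g \<Longrightarrow> cd f = A \<Longrightarrow> cd g = B \<Longrightarrow> p2 A B \<cdot> pr f g = g"
  using pair_all by auto

lemma prod_ext: assumes "ar h" "ar k" "dm h = dm k" "cd h = prd A B" "cd k = prd A B" "ob A" "ob B"
  "p1 A B \<cdot> h = p1 A B \<cdot> k" "p2 A B \<cdot> h = p2 A B \<cdot> k"
  shows "h = k"
proof -
  have u: "\<And>h. h \<in> Hom C (dm k) (prd A B) \<Longrightarrow> p1 A B \<cdot> h = p1 A B \<cdot> k \<Longrightarrow> p2 A B \<cdot> h = p2 A B \<cdot> k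
     \<Longrightarrow> h = pr (p1 A B \<cdot> k) (p2 A B \<cdot> k)"
  proof -
    fix h assume h: "h \<in> Hom C (dm k) (prd A B)" "p1 A B \<cdot> h = p1 A B \<cdot> k" "p2 A B \<cdot> h = p2 A B \<cdot> k"
    note F = fp_univ[of A B "dm k" "p1 A B \<cdot> k" "p2 A B \<cdot> k"]
    show "h = pr (p1 A B \<cdot> k) (p2 A B \<cdot> k)"
      using F h assms unfolding Hom_def by auto
  qed
  have "h = pr (p1 A B \<cdot> k) (p2 A B \<cdot> k)" using u[of h] assms unfolding Hom_def by auto
  moreover have "k = pr (p1 A B \<cdot> k) (p2 A B \<cdot> k)" using u[of k] assms unfolding Hom_def by auto
  ultimately show ?thesis by simp
qed

lemma pair_eta[simp]: "ar h \<Longrightarrow> cd h = prd A B \<Longrightarrow> ob A \<Longrightarrow> ob B \<Longrightarrow> pr (p1 A B \<cdot> h) (p2 A B \<cdot> h) = h"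
  by (rule prod_ext[of _ _ A B]) auto

lemma pair_id[simp]: "ob A \<Longrightarrow> ob B \<Longrightarrow> pr (p1 A B) (p2 A B) = idn (prd A B)"
  by (rule prod_ext[of _ _ A B]) auto

lemma pair_comp[simp]: "ar f \<Longrightarrow> ar g \<Longrightarrow> ar h \<Longrightarrow> dm f = dm g \<Longrightarrow> cd h = dm f \<Longrightarrow>
   pr f g \<cdot> h = pr (f \<cdot> h) (g \<cdot> h)"
  apply (rule prod_ext[of _ _ "cd f" "cd g"])
  apply auto
  apply (metis assoc p1_ar(1,2) p_pair(1) pair_ar ar_ob(2))
  apply (metis assoc p2_ar(1,2) p_pair(2) pair_ar ar_ob(2))
  done

lemma times_eq[simp]: "ar f \<Longrightarrow> ob Y \<Longrightarrow> times C Pr f (idn Y) = pr (f \<cdot> p1 (dm f) Y) (p2 (dm f) Y)"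
  unfolding times_def by simp

end

locale doct = fpcat C Pr for C :: "('o,'a) cat" and Pr :: "('o,'a) prods" +
  fixes D :: "('o,'a,'x) doctrine"
  assumes doc: "doctrine C D"
begin

abbreviation lq where "lq \<equiv> PL D"
abbreviation PMD where "PMD \<equiv> PM D"
abbreviation POD where "POD \<equiv> PO D"

lemma PO_PM[simp]: "ar f \<Longrightarrow> dm f = X \<Longrightarrow> x \<in> POD (cd f) \<Longrightarrow> PMD f x \<in> POD X"
  using doc unfolding doctrine_def by auto

lemma PM_PM[simp]: "ar f \<Longrightarrow> ar g \<Longrightarrow> cd f = dm g \<Longrightarrow> x \<in> POD (cd g) \<Longrightarrow> PMD f (PMD g x) = PMD (g \<cdot> f) x"
  using doc unfolding doctrine_def by auto

lemma PM_id[simp]: "ob A \<Longrightarrow> x \<in> POD A \<Longrightarrow> PMD (idn A) x = x"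
  using doc unfolding doctrine_def by auto

lemma lq_refl[simp]: "ob A \<Longrightarrow> x \<in> POD A \<Longrightarrow> lq A x x"
  using doc unfolding doctrine_def by auto

lemma lq_trans: "ob A \<Longrightarrow> x \<in> POD A \<Longrightarrow> y \<in> POD A \<Longrightarrow> z \<in> POD A \<Longrightarrow> lq A x y \<Longrightarrow> lq A y z \<Longrightarrow> lq A x z"
  using doc unfolding doctrine_def by blast

lemma lq_mono: "ar f \<Longrightarrow> dm f = X \<Longrightarrow> cd f = Y \<Longrightarrow> x \<in> POD Y \<Longrightarrow> y \<in> POD Y \<Longrightarrow> lq Y x y \<Longrightarrow> lq X (PMD f x) (PMD f y)"
  using doc unfolding doctrine_def by blast

abbreviation T where "T \<equiv> exT C Pr D"
abbreviation lx where "lx \<equiv> exle C Pr D"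
abbreviation cls where "cls \<equiv> exclass C Pr D"
abbreviation PX where "PX \<equiv> Pex C Pr D"

lemma T_iff[simp]: "(B, a) \<in> T A \<longleftrightarrow> ob B \<and> a \<in> POD (prd A B)"
  unfolding exT_def by auto

lemma lx_iff: "lx A (B, a) (E, c) \<longleftrightarrow> (\<exists>g\<in>Hom C (prd A B) E. lq (prd A B) a (PMD (pr (p1 A B) g) c))"
  unfolding exle_def by simp

lemma lxI: "ar g \<Longrightarrow> dm g = prd A B \<Longrightarrow> cd g = E \<Longrightarrow> lq (prd A B) a (PMD (pr (p1 A B) g) c) \<Longrightarrow> lx A (B, a) (E, c)"
  unfolding lx_iff Hom_def by auto

lemma lx_refl: "ob A \<Longrightarrow> u \<in> T A \<Longrightarrow> lx A u u"
proof -
  assume a: "ob A" "u \<in> T A"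
  obtain B x where u: "u = (B, x)" by (cases u) auto
  show ?thesis unfolding u by (rule lxI[of "p2 A B"]) (use a u in auto)
qed

lemma lx_trans: assumes "ob A" "u \<in> T A" "v \<in> T A" "w \<in> T A" "lx A u v" "lx A v w" shows "lx A u w"
proof -
  obtain B a E b F c where u: "u = (B,a)" and v: "v = (E,b)" and w: "w = (F, c)" by (cases u, cases v, cases w) auto
  from assms(5) obtain f where f: "ar f" "dm f = prd A B" "cd f = E" "lq (prd A B) a (PMD (pr (p1 A B) f) b)"
    unfolding u v lx_iff Hom_def by auto
  from assms(6) obtain g where g: "ar g" "dm g = prd A E" "cd g = F" "lq (prd A E) b (PMD (pr (p1 A E) g) c)"
    unfolding w v lx_iff Hom_def by auto
  have o: "ob B" "ob E" "ob F" "a \<in> POD (prd A B)" "b \<in> POD (prd A E)" "c \<in> POD (prd A F)" using assms u v w by auto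
  have "lq (prd A B) (PMD (pr (p1 A B) f) b) (PMD (pr (p1 A B) f) (PMD (pr (p1 A E) g) c))"
    by (rule lq_mono) (use f g o assms in auto)
  hence "lq (prd A B) (PMD (pr (p1 A B) f) b) (PMD (pr (p1 A B) (g \<cdot> pr (p1 A B) f)) c)"
    using f g o assms by simp
  hence "lq (prd A B) a (PMD (pr (p1 A B) (g \<cdot> pr (p1 A B) f)) c)"
    using lq_trans[OF _ _ _ _ f(4)] f g o assms by auto
  thus ?thesis unfolding u w using f g o assms by (intro lxI) auto
qed

lemma lx_eqI: assumes "ob A" "ob B" "ob E" "x \<in> POD W" "ar \<phi>" "dm \<phi> = prd A B" "cd \<phi> = W"
  "ar \<chi>" "dm \<chi> = prd A E" "cd \<chi> = W" "ar g" "dm g = prd A B" "cd g = E" "\<chi> \<cdot> pr (p1 A B) g = \<phi>"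
  shows "lx A (B, PMD \<phi> x) (E, PMD \<chi> x)"
  apply (rule lxI[OF assms(11-13)]) using assms by simp

lemma cls_mem: "ob A \<Longrightarrow> u \<in> T A \<Longrightarrow> u \<in> cls A u"
  unfolding exclass_def using lx_refl by auto

lemma cls_eq: assumes "ob A" "u \<in> T A" "v \<in> T A" "lx A u v" "lx A v u" shows "cls A u = cls A v"
proof -
  have "w \<in> cls A u \<longleftrightarrow> w \<in> cls A v" for w
  proof
    assume "w \<in> cls A u" hence w: "w \<in> T A" "lx A u w" "lx A w u" unfolding exclass_def by auto
    show "w \<in> cls A v" using w lx_trans[OF assms(1) w(1) assms(2,3) w(3) assms(4)]
      lx_trans[OF assms(1,3,2) w(1) assms(5) w(2)] unfolding exclass_def by auto
  next
    assume "w \<in> cls A v" hence w: "w \<in> T A" "lx A v w" "lx A w v" unfolding exclass_def by auto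
    show "w \<in> cls A u" using w lx_trans[OF assms(1) w(1) assms(3,2) w(3) assms(5)]
      lx_trans[OF assms(1,2,3) w(1) assms(4) w(2)] unfolding exclass_def by auto
  qed
  thus ?thesis by auto
qed

lemma Pex_PO: "PO PX A = cls A ` T A" unfolding Pex_def by simp

lemma cls_PL: assumes "ob A" "u \<in> T A" "v \<in> T A" shows "PL PX A (cls A u) (cls A v) \<longleftrightarrow> lx A u v"
proof
  assume "PL PX A (cls A u) (cls A v)"
  then obtain u' v' where a: "u' \<in> cls A u" "v' \<in> cls A v" "lx A u' v'" unfolding Pex_def by auto
  hence b: "u' \<in> T A" "v' \<in> T A" "lx A u u'" "lx A v' v" unfolding exclass_def by auto
  have "lx A u v'" using lx_trans[OF assms(1,2) b(1,2) b(3) a(3)] .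
  thus "lx A u v" using lx_trans[OF assms(1,2) b(2) assms(3) _ b(4)] by simp
next
  assume "lx A u v" thus "PL PX A (cls A u) (cls A v)" unfolding Pex_def using cls_mem[OF assms(1,2)] cls_mem[OF assms(1,3)] by auto
qed

definition rdx where "rdx f u = (fst u, PMD (times C Pr f (idn (fst u))) (snd u))"

lemma rdx_T: "ar f \<Longrightarrow> u \<in> T (cd f) \<Longrightarrow> rdx f u \<in> T (dm f)"
  unfolding rdx_def by (cases u) auto

lemma rdx_simp[simp]: "rdx f (B, a) = (B, PMD (times C Pr f (idn B)) a)" unfolding rdx_def by simp

lemma rdx_mono: assumes "ar f" "u \<in> T (cd f)" "v \<in> T (cd f)" "lx (cd f) u v" shows "lx (dm f) (rdx f u) (rdx f v)"
proof -
  obtain B a E c where u: "u = (B,a)" and v: "v = (E,c)" by (cases u, cases v) auto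
  from assms(4) obtain g where g: "ar g" "dm g = prd (cd f) B" "cd g = E" "lq (prd (cd f) B) a (PMD (pr (p1 (cd f) B) g) c)"
    unfolding u v lx_iff Hom_def by auto
  have o: "ob B" "ob E" "a \<in> POD (prd (cd f) B)" "c \<in> POD (prd (cd f) E)" using assms u v by auto
  let ?h = "pr (f \<cdot> p1 (dm f) B) (p2 (dm f) B)"
  have "lq (prd (dm f) B) (PMD ?h a) (PMD ?h (PMD (pr (p1 (cd f) B) g) c))"
    by (rule lq_mono) (use g o assms in auto)
  hence "lq (prd (dm f) B) (PMD ?h a) (PMD (pr (p1 (dm f) B) (g \<cdot> ?h)) (PMD (pr (f \<cdot> p1 (dm f) E) (p2 (dm f) E)) c))"
    using g o assms by simp
  note fact = this
  show ?thesis unfolding u v rdx_simp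
    apply (rule lxI[of "g \<cdot> ?h"]) using g o assms apply simp_all
    using fact g o assms by simp
qed

lemma UN_const_on: "x \<in> S \<Longrightarrow> (\<And>w. w \<in> S \<Longrightarrow> F w = c) \<Longrightarrow> (\<Union>w\<in>S. F w) = c"
  by auto

lemma PM_cls: assumes "ar f" "u \<in> T (cd f)" shows "PM PX f (cls (cd f) u) = cls (dm f) (rdx f u)"
proof -
  have K: "\<And>w. w \<in> cls (cd f) u \<Longrightarrow> cls (dm f) (rdx f w) = cls (dm f) (rdx f u)"
  proof -
    fix w assume "w \<in> cls (cd f) u"
    hence w: "w \<in> T (cd f)" "lx (cd f) u w" "lx (cd f) w u" unfolding exclass_def by auto
    show "cls (dm f) (rdx f w) = cls (dm f) (rdx f u)"
      by (rule cls_eq[OF _ rdx_T[OF assms(1) w(1)] rdx_T[OF assms] rdx_mono[OF assms(1) w(1) assms(2) w(3)]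
           rdx_mono[OF assms(1) assms(2) w(1) w(2)]]) (use assms in simp)
  qed
  have M: "u \<in> cls (cd f) u" using cls_mem assms by auto
  have E: "PM PX f (cls (cd f) u) = (\<Union>w\<in>cls (cd f) u. cls (dm f) (rdx f w))"
    unfolding Pex_def rdx_def by simp
  show ?thesis unfolding E by (rule UN_const_on[OF M K])
qed

lemma lift_left:
  assumes o: "ob X" "ob A" "ar p" "dm p = X" "cd p = A"
    and ET: "\<And>u. u \<in> T X \<Longrightarrow> E u \<in> T A"
    and adj: "\<And>u v. u \<in> T X \<Longrightarrow> v \<in> T A \<Longrightarrow> lx A (E u) v \<longleftrightarrow> lx X u (rdx p v)"
  shows "\<And>u. u \<in> T X \<Longrightarrow> (\<Union>w\<in>cls X u. cls A (E w)) = cls A (E u)"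
    and "is_left_adj PX p X A (\<lambda>S. \<Union>w\<in>S. cls A (E w))"
proof -
  have rT: "rdx p v \<in> T X" if "v \<in> T A" for v using rdx_T[of p v] o that by simp
  have mono: "lx A (E u) (E u')" if "u \<in> T X" "u' \<in> T X" "lx X u u'" for u u'
  proof -
    have "lx X u' (rdx p (E u'))" using adj[OF that(2) ET[OF that(2)]] lx_refl[OF o(2) ET[OF that(2)]] by simp
    hence "lx X u (rdx p (E u'))" by (rule lx_trans[OF o(1) that(1) that(2) rT[OF ET[OF that(2)]] that(3)])
    thus ?thesis by (simp add: adj[OF that(1) ET[OF that(2)]])
  qed
  show val: "(\<Union>w\<in>cls X u. cls A (E w)) = cls A (E u)" if u: "u \<in> T X" for u
  proof (rule UN_const_on)
    show "u \<in> cls X u" using cls_mem u o by simp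
    fix w assume "w \<in> cls X u"
    hence w: "w \<in> T X" "lx X u w" "lx X w u" unfolding exclass_def by auto
    show "cls A (E w) = cls A (E u)" by (rule cls_eq[OF o(2) ET[OF w(1)] ET[OF u] mono[OF w(1) u w(3)] mono[OF u w(1) w(2)]])
  qed
  show "is_left_adj PX p X A (\<lambda>S. \<Union>w\<in>S. cls A (E w))"
    unfolding is_left_adj_def Pex_PO
  proof (intro conjI ballI)
    fix x assume "x \<in> cls X ` T X"
    then obtain u where u: "u \<in> T X" "x = cls X u" by auto
    show "(\<Union>w\<in>x. cls A (E w)) \<in> cls A ` T A" using u val ET by auto
    fix a assume "a \<in> cls A ` T A"
    then obtain v where v: "v \<in> T A" "a = cls A v" by auto
    have pm: "PM PX p a = cls X (rdx p v)" using PM_cls[of p v] v o by simp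
    have "PL PX A (\<Union>w\<in>x. cls A (E w)) a = lx A (E u) v"
      unfolding u(2) val[OF u(1)] v(2) by (rule cls_PL[OF o(2) ET[OF u(1)] v(1)])
    also have "\<dots> = lx X u (rdx p v)" by (rule adj[OF u(1) v(1)])
    also have "\<dots> = PL PX X x (PM PX p a)" unfolding pm u(2) by (rule cls_PL[OF o(1) u(1) rT[OF v(1)], symmetric])
    finally show "PL PX A (\<Union>w\<in>x. cls A (E w)) a = PL PX X x (PM PX p a)" .
  qed
qed

lemma lift_right:
  assumes o: "ob X" "ob A" "ar p" "dm p = X" "cd p = A"
    and ET: "\<And>u. u \<in> T X \<Longrightarrow> E u \<in> T A"
    and adj: "\<And>u v. u \<in> T X \<Longrightarrow> v \<in> T A \<Longrightarrow> lx X (rdx p v) u \<longleftrightarrow> lx A v (E u)"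
  shows "\<And>u. u \<in> T X \<Longrightarrow> (\<Union>w\<in>cls X u. cls A (E w)) = cls A (E u)"
    and "is_right_adj PX p X A (\<lambda>S. \<Union>w\<in>S. cls A (E w))"
proof -
  have rT: "rdx p v \<in> T X" if "v \<in> T A" for v using rdx_T[of p v] o that by simp
  have mono: "lx A (E u) (E u')" if "u \<in> T X" "u' \<in> T X" "lx X u u'" for u u'
  proof -
    have "lx X (rdx p (E u)) u" using adj[OF that(1) ET[OF that(1)]] lx_refl[OF o(2) ET[OF that(1)]] by simp
    hence "lx X (rdx p (E u)) u'" by (rule lx_trans[OF o(1) rT[OF ET[OF that(1)]] that(1) that(2) _ that(3)])
    thus ?thesis by (simp add: adj[OF that(2) ET[OF that(1)]])
  qed
  show val: "(\<Union>w\<in>cls X u. cls A (E w)) = cls A (E u)" if u: "u \<in> T X" for u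
  proof (rule UN_const_on)
    show "u \<in> cls X u" using cls_mem u o by simp
    fix w assume "w \<in> cls X u"
    hence w: "w \<in> T X" "lx X u w" "lx X w u" unfolding exclass_def by auto
    show "cls A (E w) = cls A (E u)" by (rule cls_eq[OF o(2) ET[OF w(1)] ET[OF u] mono[OF w(1) u w(3)] mono[OF u w(1) w(2)]])
  qed
  show "is_right_adj PX p X A (\<lambda>S. \<Union>w\<in>S. cls A (E w))"
    unfolding is_right_adj_def Pex_PO
  proof (intro conjI ballI)
    fix x assume "x \<in> cls X ` T X"
    then obtain u where u: "u \<in> T X" "x = cls X u" by auto
    show "(\<Union>w\<in>x. cls A (E w)) \<in> cls A ` T A" using u val ET by auto
    fix a assume "a \<in> cls A ` T A"
    then obtain v where v: "v \<in> T A" "a = cls A v" by auto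
    have pm: "PM PX p a = cls X (rdx p v)" using PM_cls[of p v] v o by simp
    have "PL PX A a (\<Union>w\<in>x. cls A (E w)) = lx A v (E u)"
      unfolding u(2) val[OF u(1)] v(2) by (rule cls_PL[OF o(2) v(1) ET[OF u(1)]])
    also have "\<dots> = lx X (rdx p v) u" by (rule adj[OF u(1) v(1), symmetric])
    also have "\<dots> = PL PX X (PM PX p a) x" unfolding pm u(2) by (rule cls_PL[OF o(1) rT[OF v(1)] u(1), symmetric])
    finally show "PL PX X (PM PX p a) x = PL PX A a (\<Union>w\<in>x. cls A (E w))" by simp
  qed
qed

end

context fpcat begin

definition cstr where "cstr p K q s \<longleftrightarrow> ar p \<and> ar q \<and> ar s \<and> ob K \<and> dm q = dm p \<and> cd q = K \<and>
   dm s = prd (cd p) K \<and> cd s = dm p \<and> p \<cdot> s = p1 (cd p) K \<and> q \<cdot> s = p2 (cd p) K \<and> s \<cdot> pr p q = idn (dm p)"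

lemma cs_basic: "cstr p K q s \<Longrightarrow> ar p \<and> ar q \<and> ar s \<and> ob K \<and> dm q = dm p \<and> cd q = K \<and>
   dm s = prd (cd p) K \<and> cd s = dm p \<and> ob (dm p) \<and> ob (cd p)"
  unfolding cstr_def by auto

lemma cs_ps: "cstr p K q s \<Longrightarrow> ar h \<Longrightarrow> cd h = prd (cd p) K \<Longrightarrow> p \<cdot> (s \<cdot> h) = p1 (cd p) K \<cdot> h"
  "cstr p K q s \<Longrightarrow> ar h \<Longrightarrow> cd h = prd (cd p) K \<Longrightarrow> q \<cdot> (s \<cdot> h) = p2 (cd p) K \<cdot> h"
  unfolding cstr_def by (metis assoc)+

lemma cs_sp: "cstr p K q s \<Longrightarrow> ar h \<Longrightarrow> cd h = dm p \<Longrightarrow> s \<cdot> pr (p \<cdot> h) (q \<cdot> h) = h"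
proof -
  assume c: "cstr p K q s" "ar h" "cd h = dm p"
  have "s \<cdot> pr (p \<cdot> h) (q \<cdot> h) = s \<cdot> (pr p q \<cdot> h)" using c cs_basic[OF c(1)] by simp
  also have "\<dots> = (s \<cdot> pr p q) \<cdot> h" using c cs_basic[OF c(1)] by simp
  also have "\<dots> = h" using c unfolding cstr_def by simp
  finally show ?thesis .
qed

lemma cstr_exists: assumes "is_proj C Pr p X A"
  shows "ar p \<and> dm p = X \<and> cd p = A \<and> ob X \<and> ob A \<and> (\<exists>K q s. cstr p K q s)"
proof -
  obtain A1 A2 where o: "ob A1" "ob A2" "X = prd A1 A2" and
    c: "(A = A1 \<and> p = p1 A1 A2) \<or> (A = A2 \<and> p = p2 A1 A2)"
    using assms unfolding is_proj_def by auto
  show ?thesis using c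
  proof
    assume c: "A = A1 \<and> p = p1 A1 A2"
    have "cstr p A2 (p2 A1 A2) (idn (prd A1 A2))" unfolding cstr_def using o c by simp
    thus ?thesis using o c by auto
  next
    assume c: "A = A2 \<and> p = p2 A1 A2"
    have "cstr p A1 (p1 A1 A2) (pr (p2 A2 A1) (p1 A2 A1))" unfolding cstr_def using o c by simp
    thus ?thesis using o c by auto
  qed
qed

end

context doct begin

definition psi where "psi A K B s = pr (s \<cdot> pr (p1 A (prd K B)) (p1 K B \<cdot> p2 A (prd K B))) (p2 K B \<cdot> p2 A (prd K B))"

definition Eex where "Eex p K s u = (prd K (fst u), PMD (psi (cd p) K (fst u) s) (snd u))"

lemma psi_ty: "cstr p K q s \<Longrightarrow> ob B \<Longrightarrow> ar (psi (cd p) K B s) \<and> dm (psi (cd p) K B s) = prd (cd p) (prd K B) \<and>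
   cd (psi (cd p) K B s) = prd (dm p) B"
  unfolding psi_def using cs_basic by simp

lemma Eex_T: "cstr p K q s \<Longrightarrow> u \<in> T (dm p) \<Longrightarrow> Eex p K s u \<in> T (cd p)"
  unfolding Eex_def using psi_ty cs_basic by (cases u) simp

lemma Eex_adj: assumes cs: "cstr p K q s" and u: "u \<in> T (dm p)" and v: "v \<in> T (cd p)"
  shows "lx (cd p) (Eex p K s u) v \<longleftrightarrow> lx (dm p) u (rdx p v)"
proof -
  obtain B a E c where uu: "u = (B,a)" and vv: "v = (E,c)" by (cases u, cases v) auto
  define X where "X = dm p"
  define A where "A = cd p"
  have dX: "dm p = X" "cd p = A" using X_def A_def by auto
  note cb = cs_basic[OF cs, folded X_def A_def] dX
  note ps = cs_ps[OF cs, folded X_def A_def]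
  note sp = cs_sp[OF cs, folded X_def A_def]
  have o: "ob B" "ob E" "a \<in> POD (prd X B)" "c \<in> POD (prd A E)" using u v uu vv X_def A_def by auto
  let ?psi = "pr (s \<cdot> pr (p1 A (prd K B)) (p1 K B \<cdot> p2 A (prd K B))) (p2 K B \<cdot> p2 A (prd K B))"
  let ?inv = "pr (p \<cdot> p1 X B) (pr (q \<cdot> p1 X B) (p2 X B))"
  have inv: "?psi \<cdot> ?inv = idn (prd X B)" using cb o ps sp by simp
  show ?thesis unfolding uu vv Eex_def rdx_simp fst_conv snd_conv psi_def A_def[symmetric] X_def[symmetric]
  proof
    assume "lx A (prd K B, PMD ?psi a) (E, c)"
    then obtain g where g: "ar g" "dm g = prd A (prd K B)" "cd g = E"
      "lq (prd A (prd K B)) (PMD ?psi a) (PMD (pr (p1 A (prd K B)) g) c)"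
      unfolding lx_iff Hom_def by auto
    have "lq (prd X B) (PMD ?inv (PMD ?psi a)) (PMD ?inv (PMD (pr (p1 A (prd K B)) g) c))"
      by (rule lq_mono) (use g cb o in simp_all)
    hence "lq (prd X B) (PMD (?psi \<cdot> ?inv) a) (PMD (pr (p1 A (prd K B)) g \<cdot> ?inv) c)"
      using g cb o by (subst (asm) PM_PM, simp_all)+
    hence fact: "lq (prd X B) a (PMD (pr (p1 A (prd K B)) g \<cdot> ?inv) c)"
      unfolding inv using o cb by simp
    show "lx X (B, a) (E, PMD (times C Pr p (idn E)) c)"
      apply (rule lxI[of "g \<cdot> ?inv"]) using g o cb apply simp_all
      using fact g o cb by simp
  next
    assume "lx X (B, a) (E, PMD (times C Pr p (idn E)) c)"
    then obtain g where g: "ar g" "dm g = prd X B" "cd g = E"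
      "lq (prd X B) a (PMD (pr (p1 X B) g) (PMD (times C Pr p (idn E)) c))"
      unfolding lx_iff Hom_def by auto
    have "lq (prd A (prd K B)) (PMD ?psi a) (PMD ?psi (PMD (pr (p1 X B) g) (PMD (times C Pr p (idn E)) c)))"
      by (rule lq_mono) (use g cb o in simp_all)
    note fact = this
    show "lx A (prd K B, PMD ?psi a) (E, c)"
      apply (rule lxI[of "g \<cdot> ?psi"]) using g o cb apply simp_all
      using fact g o cb ps by simp
  qed
qed

end

context fpcat begin

lemma pb_comm: "pullback C p' f' p f \<Longrightarrow> p \<cdot> f' = f \<cdot> p'"
  unfolding pullback_def by simp

lemma pb_use: assumes "pullback C p' f' p f" "ob Z" "ar g" "dm g = Z" "cd g = cd p'" "ar h" "dm h = Z" "cd h = dm p"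
  "f \<cdot> g = p \<cdot> h"
  shows "\<exists>k. ar k \<and> dm k = Z \<and> cd k = dm p' \<and> p' \<cdot> k = g \<and> f' \<cdot> k = h"
proof -
  have "\<exists>!k. k \<in> Hom C Z (dm p') \<and> p' \<cdot> k = g \<and> f' \<cdot> k = h"
    using assms unfolding pullback_def Hom_def by auto
  thus ?thesis unfolding Hom_def by auto
qed

lemma key_sq: assumes cs: "cstr p K q s" and f: "ar f" "cd f = cd p" and f': "ar f'" "cd f' = dm p"
  and comm: "p \<cdot> f' = f \<cdot> p'" and p': "ar p'" "cd p' = dm f" and w: "ar w" "cd w = dm f'" "dm f' = dm p'"
  shows "s \<cdot> pr (f \<cdot> (p' \<cdot> w)) (q \<cdot> (f' \<cdot> w)) = f' \<cdot> w"
proof -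
  note cb = cs_basic[OF cs]
  have "p \<cdot> (f' \<cdot> w) = f \<cdot> (p' \<cdot> w)"
    using comm f f' p' w cb by (metis assoc)
  moreover have "s \<cdot> pr (p \<cdot> (f' \<cdot> w)) (q \<cdot> (f' \<cdot> w)) = f' \<cdot> w"
    by (rule cs_sp[OF cs]) (use f f' w in simp_all)
  ultimately show ?thesis by simp
qed

end

context doct begin

lemma Eex_BC: assumes cs: "cstr p K q s" and cs': "cstr p' K' q' s'"
  and f: "ar f" "dm f = cd p'" "cd f = cd p" and f': "ar f'" "dm f' = dm p'" "cd f' = dm p"
  and pb: "pullback C p' f' p f" and u: "u \<in> T (dm p)"
  shows "lx (cd p') (Eex p' K' s' (rdx f' u)) (rdx f (Eex p K s u))"
    "lx (cd p') (rdx f (Eex p K s u)) (Eex p' K' s' (rdx f' u))"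
proof -
  obtain B a where uu: "u = (B,a)" by (cases u) auto
  define X where "X = dm p"
  define A where "A = cd p"
  define X' where "X' = dm p'"
  define A' where "A' = cd p'"
  have dX: "dm p = X" "cd p = A" "dm p' = X'" "cd p' = A'" using X_def A_def X'_def A'_def by auto
  note cb = cs_basic[OF cs, folded X_def A_def] dX
  note ps = cs_ps[OF cs, folded X_def A_def]
  note sp = cs_sp[OF cs, folded X_def A_def]
  note cb' = cs_basic[OF cs', folded X'_def A'_def]
  note ps' = cs_ps[OF cs', folded X'_def A'_def]
  note sp' = cs_sp[OF cs', folded X'_def A'_def]
  note ff = f[folded X_def A_def X'_def A'_def] f'[folded X_def A_def X'_def A'_def]
  have comm: "p \<cdot> f' = f \<cdot> p'" by (rule pb_comm[OF pb])
  have o: "ob B" "a \<in> POD (prd X B)" using u uu X_def by auto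
  show "lx (cd p') (Eex p' K' s' (rdx f' u)) (rdx f (Eex p K s u))"
  proof -
    let ?w = "s' \<cdot> pr (p1 A' (prd K' B)) (p1 K' B \<cdot> p2 A' (prd K' B))"
    have pw: "p' \<cdot> ?w = p1 A' (prd K' B)" using ps' cb' o by simp
    have key: "s \<cdot> pr (f \<cdot> (p' \<cdot> ?w)) (q \<cdot> (f' \<cdot> ?w)) = f' \<cdot> ?w"
      by (rule key_sq[OF cs f(1,3) f'(1,3) comm]) (use cb cb' ff o in simp_all)
    hence key2: "s \<cdot> pr (f \<cdot> p1 A' (prd K' B)) (q \<cdot> (f' \<cdot> ?w)) = f' \<cdot> ?w" unfolding pw .
    let ?g = "pr (q \<cdot> (f' \<cdot> ?w)) (p2 K' B \<cdot> p2 A' (prd K' B))"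
    have eq: "pr (s \<cdot> pr (f \<cdot> p1 A' (prd K B)) (p1 K B \<cdot> p2 A' (prd K B))) (p2 K B \<cdot> p2 A' (prd K B)) \<cdot> pr (p1 A' (prd K' B)) ?g
       = pr (f' \<cdot> ?w) (p2 K' B \<cdot> p2 A' (prd K' B))"
      using cb cb' ff o key2 by simp
    show ?thesis unfolding uu Eex_def rdx_simp fst_conv snd_conv psi_def dX
      using cb cb' ff o apply simp
      apply (rule lx_eqI[where x=a and W="prd X B" and g="?g"])
      using cb cb' ff o eq by simp_all
  qed
  show "lx (cd p') (rdx f (Eex p K s u)) (Eex p' K' s' (rdx f' u))"
  proof -
    let ?Z = "prd A' (prd K B)"
    let ?h = "s \<cdot> pr (f \<cdot> p1 A' (prd K B)) (p1 K B \<cdot> p2 A' (prd K B))"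
    have "\<exists>k. ar k \<and> dm k = ?Z \<and> cd k = dm p' \<and> p' \<cdot> k = p1 A' (prd K B) \<and> f' \<cdot> k = ?h"
      by (rule pb_use[OF pb]) (use cb cb' ff o ps in simp_all)
    then obtain m where m: "ar m" "dm m = ?Z" "cd m = X'" "p' \<cdot> m = p1 A' (prd K B)" "f' \<cdot> m = ?h"
      unfolding dX by blast
    have sm: "s' \<cdot> pr (p1 A' (prd K B)) (q' \<cdot> m) = m"
      using sp'[of m] m cb' by simp
    show ?thesis unfolding uu Eex_def rdx_simp fst_conv snd_conv psi_def dX
      using cb cb' ff o apply simp
      apply (rule lx_eqI[where x=a and W="prd X B" and g="pr (q' \<cdot> m) (p2 K B \<cdot> p2 A' (prd K B))"])
      using cb cb' ff o sm m by simp_all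
  qed
qed

end

context fpcat begin

lemma pb_times: assumes "ar h" "dm h = Z'" "cd h = Z" "ob Y"
  shows "pullback C (p1 Z' Y) (pr (h \<cdot> p1 Z' Y) (p2 Z' Y)) (p1 Z Y) h"
  unfolding pullback_def
proof (intro conjI ballI impI)
  have o: "ob Z" "ob Z'" using assms ar_ob by auto
  show "p1 Z Y \<cdot> pr (h \<cdot> p1 Z' Y) (p2 Z' Y) = h \<cdot> p1 Z' Y" using assms o by simp
  fix Z0 g k assume a: "Z0 \<in> Obj C" "g \<in> Hom C Z0 (cd (p1 Z' Y))" "k \<in> Hom C Z0 (dm (p1 Z Y))" "h \<cdot> g = p1 Z Y \<cdot> k"
  hence g: "ar g" "dm g = Z0" "cd g = Z'" and k: "ar k" "dm k = Z0" "cd k = prd Z Y" using o assms unfolding Hom_def by auto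
  show "\<exists>!m. m \<in> Hom C Z0 (dm (p1 Z' Y)) \<and> p1 Z' Y \<cdot> m = g \<and> pr (h \<cdot> p1 Z' Y) (p2 Z' Y) \<cdot> m = k"
  proof
    show "pr g (p2 Z Y \<cdot> k) \<in> Hom C Z0 (dm (p1 Z' Y)) \<and> p1 Z' Y \<cdot> pr g (p2 Z Y \<cdot> k) = g \<and>
        pr (h \<cdot> p1 Z' Y) (p2 Z' Y) \<cdot> pr g (p2 Z Y \<cdot> k) = k"
      using g k o assms a(4) unfolding Hom_def by simp
    fix m assume m: "m \<in> Hom C Z0 (dm (p1 Z' Y)) \<and> p1 Z' Y \<cdot> m = g \<and> pr (h \<cdot> p1 Z' Y) (p2 Z' Y) \<cdot> m = k"
    hence m1: "ar m" "dm m = Z0" "cd m = prd Z' Y" "p1 Z' Y \<cdot> m = g" using o assms unfolding Hom_def by auto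
    have "p2 Z Y \<cdot> k = p2 Z Y \<cdot> (pr (h \<cdot> p1 Z' Y) (p2 Z' Y) \<cdot> m)" using m by simp
    also have "\<dots> = p2 Z' Y \<cdot> m" using m1 o assms g by simp
    finally have "p2 Z' Y \<cdot> m = p2 Z Y \<cdot> k" by simp
    have "m = pr (p1 Z' Y \<cdot> m) (p2 Z' Y \<cdot> m)" using pair_eta[of m Z' Y] m1(1,3) o assms(4) by simp
    thus "m = pr g (p2 Z Y \<cdot> k)" using m1 \<open>p2 Z' Y \<cdot> m = p2 Z Y \<cdot> k\<close> by simp
  qed
qed

definition expP where "expP K B = (SOME x. ob (fst x) \<and> snd x \<in> Hom C (prd (fst x) K) B \<and>
   (\<forall>Z\<in>Obj C. \<forall>g\<in>Hom C (prd Z K) B. \<exists>h. h \<in> Hom C Z (fst x) \<and> snd x \<cdot> times C Pr h (idn K) = g))"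

definition expE where "expE K B = fst (expP K B)"
definition expV where "expV K B = snd (expP K B)"

lemma exp_props: assumes ex: "has_exponents C Pr" and o: "ob K" "ob B"
  shows "ob (expE K B) \<and> ar (expV K B) \<and> dm (expV K B) = prd (expE K B) K \<and> cd (expV K B) = B"
    "ob Z \<Longrightarrow> ar g \<Longrightarrow> dm g = prd Z K \<Longrightarrow> cd g = B \<Longrightarrow>
     \<exists>h. ar h \<and> dm h = Z \<and> cd h = expE K B \<and> expV K B \<cdot> pr (h \<cdot> p1 Z K) (p2 Z K) = g"
proof -
  have "\<exists>x. ob (fst x) \<and> snd x \<in> Hom C (prd (fst x) K) B \<and>
   (\<forall>Z\<in>Obj C. \<forall>g\<in>Hom C (prd Z K) B. \<exists>h. h \<in> Hom C Z (fst x) \<and> snd x \<cdot> times C Pr h (idn K) = g)"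
  proof -
    obtain E ev where "ob E" "ev \<in> Hom C (prd E K) B" "\<forall>Z\<in>Obj C. \<forall>g\<in>Hom C (prd Z K) B.
          \<exists>!h. h \<in> Hom C Z E \<and> ev \<cdot> times C Pr h (idn K) = g"
      using ex o unfolding has_exponents_def by blast
    thus ?thesis by (intro exI[of _ "(E, ev)"]) (simp, metis)
  qed
  hence P: "ob (expE K B) \<and> expV K B \<in> Hom C (prd (expE K B) K) B \<and>
   (\<forall>Z\<in>Obj C. \<forall>g\<in>Hom C (prd Z K) B. \<exists>h. h \<in> Hom C Z (expE K B) \<and> expV K B \<cdot> times C Pr h (idn K) = g)"
    unfolding expE_def expV_def expP_def by (rule someI_ex)
  thus "ob (expE K B) \<and> ar (expV K B) \<and> dm (expV K B) = prd (expE K B) K \<and> cd (expV K B) = B"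
    unfolding Hom_def by auto
  assume z: "ob Z" "ar g" "dm g = prd Z K" "cd g = B"
  then obtain h where "h \<in> Hom C Z (expE K B)" "expV K B \<cdot> times C Pr h (idn K) = g"
    using P unfolding Hom_def by blast
  thus "\<exists>h. ar h \<and> dm h = Z \<and> cd h = expE K B \<and> expV K B \<cdot> pr (h \<cdot> p1 Z K) (p2 Z K) = g"
    using o z unfolding Hom_def by auto
qed

end

locale udoct = doct C Pr D for C :: "('o,'a) cat" and Pr :: "('o,'a) prods" and D :: "('o,'a,'x) doctrine" +
  fixes R :: "'a \<Rightarrow> 'x \<Rightarrow> 'x"
  assumes Radj: "\<And>p X A. is_proj C Pr p X A \<Longrightarrow> is_right_adj D p X A (R p)"
  and RBC: "\<And>p X A p' X' A' f f'. is_proj C Pr p X A \<Longrightarrow> is_proj C Pr p' X' A' \<Longrightarrow>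
           f \<in> Hom C A' A \<Longrightarrow> f' \<in> Hom C X' X \<Longrightarrow> pullback C p' f' p f \<Longrightarrow>
           (\<forall>x\<in>PO D X. R p' (PM D f' x) = PM D f (R p x))"
  and expo: "has_exponents C Pr"
begin

definition Fa where "Fa Z Y \<phi> = R (p1 Z Y) \<phi>"

lemma isp1: "ob Z \<Longrightarrow> ob Y \<Longrightarrow> is_proj C Pr (p1 Z Y) (prd Z Y) Z"
  unfolding is_proj_def by auto

lemma Fa_PO: "ob Z \<Longrightarrow> ob Y \<Longrightarrow> \<phi> \<in> POD (prd Z Y) \<Longrightarrow> Fa Z Y \<phi> \<in> POD Z"
  using Radj[OF isp1] unfolding is_right_adj_def Fa_def by auto

lemma Fa_adj: "ob Z \<Longrightarrow> ob Y \<Longrightarrow> \<phi> \<in> POD (prd Z Y) \<Longrightarrow> a \<in> POD Z \<Longrightarrow>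
   lq (prd Z Y) (PMD (p1 Z Y) a) \<phi> \<longleftrightarrow> lq Z a (Fa Z Y \<phi>)"
  using Radj[OF isp1] unfolding is_right_adj_def Fa_def by auto

lemma Fa_counit: "ob Z \<Longrightarrow> ob Y \<Longrightarrow> \<phi> \<in> POD (prd Z Y) \<Longrightarrow> lq (prd Z Y) (PMD (p1 Z Y) (Fa Z Y \<phi>)) \<phi>"
  using Fa_adj[of Z Y \<phi> "Fa Z Y \<phi>"] Fa_PO by simp

lemma Fa_BC: assumes "ar h" "dm h = Z'" "cd h = Z" "ob Y" "\<phi> \<in> POD (prd Z Y)"
  shows "Fa Z' Y (PMD (pr (h \<cdot> p1 Z' Y) (p2 Z' Y)) \<phi>) = PMD h (Fa Z Y \<phi>)"
proof -
  have o: "ob Z" "ob Z'" using assms ar_ob by auto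
  show ?thesis unfolding Fa_def
    apply (rule RBC[OF isp1[OF o(1) assms(4)] isp1[OF o(2) assms(4)], rule_format])
    using assms o pb_times[OF assms(1-4)] unfolding Hom_def by auto
qed

lemma lx_into_Fa: assumes o: "ob Z" "ob C'" "ob E" "ob K" "\<gamma> \<in> POD (prd Z C')" "\<phi> \<in> POD (prd (prd Z E) K)"
  shows "lx Z (C', \<gamma>) (E, Fa (prd Z E) K \<phi>) \<longleftrightarrow> (\<exists>k. ar k \<and> dm k = prd Z C' \<and> cd k = E \<and>
     lq (prd (prd Z C') K) (PMD (p1 (prd Z C') K) \<gamma>) (PMD (pr (pr (p1 Z C') k \<cdot> p1 (prd Z C') K) (p2 (prd Z C') K)) \<phi>))"
proof -
  have eq: "lq (prd Z C') \<gamma> (PMD (pr (p1 Z C') k) (Fa (prd Z E) K \<phi>)) \<longleftrightarrow>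
     lq (prd (prd Z C') K) (PMD (p1 (prd Z C') K) \<gamma>) (PMD (pr (pr (p1 Z C') k \<cdot> p1 (prd Z C') K) (p2 (prd Z C') K)) \<phi>)"
    if k: "ar k" "dm k = prd Z C'" "cd k = E" for k
  proof -
    have "PMD (pr (p1 Z C') k) (Fa (prd Z E) K \<phi>) =
       Fa (prd Z C') K (PMD (pr (pr (p1 Z C') k \<cdot> p1 (prd Z C') K) (p2 (prd Z C') K)) \<phi>)"
      by (rule Fa_BC[symmetric]) (use k o in simp_all)
    thus ?thesis using Fa_adj k o by simp
  qed
  show ?thesis unfolding lx_iff Hom_def using eq by auto
qed

lemma Fa_lx: assumes o: "ob Z" "ob E1" "ob K1" "ob E2" "ob K2" "x \<in> POD W"
  and t1: "ar t1" "dm t1 = prd (prd Z E1) K1" "cd t1 = W"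
  and t2: "ar t2" "dm t2 = prd (prd Z E2) K2" "cd t2 = W"
  and k: "ar k" "dm k = prd Z E1" "cd k = E2"
  and n: "ar n" "dm n = prd (prd Z E1) K2" "cd n = K1"
  and eq: "t1 \<cdot> pr (p1 (prd Z E1) K2) n = t2 \<cdot> pr (pr (p1 Z E1) k \<cdot> p1 (prd Z E1) K2) (p2 (prd Z E1) K2)"
  shows "lx Z (E1, Fa (prd Z E1) K1 (PMD t1 x)) (E2, Fa (prd Z E2) K2 (PMD t2 x))"
proof -
  let ?m = "pr (p1 (prd Z E1) K2) n"
  have c: "lq (prd (prd Z E1) K1) (PMD (p1 (prd Z E1) K1) (Fa (prd Z E1) K1 (PMD t1 x))) (PMD t1 x)"
    by (rule Fa_counit) (use o t1 in simp_all)
  have "lq (prd (prd Z E1) K2) (PMD ?m (PMD (p1 (prd Z E1) K1) (Fa (prd Z E1) K1 (PMD t1 x)))) (PMD ?m (PMD t1 x))"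
    by (rule lq_mono[OF _ _ _ _ _ c]) (use o t1 n Fa_PO in simp_all)
  hence "lq (prd (prd Z E1) K2) (PMD (p1 (prd Z E1) K2) (Fa (prd Z E1) K1 (PMD t1 x)))
      (PMD (t2 \<cdot> pr (pr (p1 Z E1) k \<cdot> p1 (prd Z E1) K2) (p2 (prd Z E1) K2)) x)"
    using o t1 n Fa_PO eq[symmetric] by simp
  thus ?thesis
    apply (subst lx_into_Fa) using o t1 t2 Fa_PO apply simp_all
    apply (rule exI[of _ k]) using k o t2 by simp
qed


definition tt where "tt A K B s = pr (s \<cdot> pr (p1 A (expE K B) \<cdot> p1 (prd A (expE K B)) K) (p2 (prd A (expE K B)) K))
   (expV K B \<cdot> pr (p2 A (expE K B) \<cdot> p1 (prd A (expE K B)) K) (p2 (prd A (expE K B)) K))"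

definition Fall where "Fall p K s u = (expE K (fst u), Fa (prd (cd p) (expE K (fst u))) K (PMD (tt (cd p) K (fst u) s) (snd u)))"

lemma Fall_T: assumes cs: "cstr p K q s" and u: "u \<in> T (dm p)" shows "Fall p K s u \<in> T (cd p)"
proof -
  obtain B a where uu: "u = (B,a)" by (cases u) auto
  note cb = cs_basic[OF cs]
  have o: "ob B" "a \<in> POD (prd (dm p) B)" using u uu by auto
  note ep = exp_props(1)[OF expo cb[THEN conjunct2, THEN conjunct2, THEN conjunct2, THEN conjunct1] o(1)]
  show ?thesis unfolding uu Fall_def tt_def fst_conv snd_conv T_iff using ep cb o
    by (intro conjI Fa_PO) simp_all
qed

lemma Fall_adj: assumes cs: "cstr p K q s" and u: "u \<in> T (dm p)" and v: "v \<in> T (cd p)"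
  shows "lx (dm p) (rdx p v) u \<longleftrightarrow> lx (cd p) v (Fall p K s u)"
proof -
  obtain B a C' c where uu: "u = (B,a)" and vv: "v = (C',c)" by (cases u, cases v) auto
  define X where "X = dm p"
  define A where "A = cd p"
  have dX: "dm p = X" "cd p = A" using X_def A_def by auto
  note cb = cs_basic[OF cs, folded X_def A_def] dX
  note ps = cs_ps[OF cs, folded X_def A_def]
  note sp = cs_sp[OF cs, folded X_def A_def]
  have o: "ob B" "ob C'" "a \<in> POD (prd X B)" "c \<in> POD (prd A C')" using u v uu vv X_def A_def by auto
  have oK: "ob K" using cb by simp
  define E where "E = expE K B"
  define V where "V = expV K B"
  note ep = exp_props(1)[OF expo oK o(1), folded E_def V_def]
  note etr = exp_props(2)[OF expo oK o(1), folded E_def V_def]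
  let ?t = "pr (s \<cdot> pr (p1 A E \<cdot> p1 (prd A E) K) (p2 (prd A E) K)) (V \<cdot> pr (p2 A E \<cdot> p1 (prd A E) K) (p2 (prd A E) K))"
  have F: "Fall p K s u = (E, Fa (prd A E) K (PMD ?t a))" unfolding Fall_def tt_def uu E_def V_def A_def by simp
  have RHS: "lx A (C', c) (E, Fa (prd A E) K (PMD ?t a)) \<longleftrightarrow> (\<exists>k. ar k \<and> dm k = prd A C' \<and> cd k = E \<and>
     lq (prd (prd A C') K) (PMD (p1 (prd A C') K) c) (PMD (pr (pr (p1 A C') k \<cdot> p1 (prd A C') K) (p2 (prd A C') K)) (PMD ?t a)))"
    by (rule lx_into_Fa) (use cb o ep in simp_all)
  have LHS: "lx X (rdx p v) u \<longleftrightarrow> (\<exists>g. ar g \<and> dm g = prd X C' \<and> cd g = B \<and>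
     lq (prd X C') (PMD (pr (p \<cdot> p1 X C') (p2 X C')) c) (PMD (pr (p1 X C') g) a))"
    unfolding uu vv rdx_simp lx_iff Hom_def using cb o by auto
  have RHS2: "lx A v (Fall p K s u) \<longleftrightarrow> (\<exists>k. ar k \<and> dm k = prd A C' \<and> cd k = E \<and>
     lq (prd (prd A C') K) (PMD (p1 (prd A C') K) c) (PMD (pr (pr (p1 A C') k \<cdot> p1 (prd A C') K) (p2 (prd A C') K)) (PMD ?t a)))"
    unfolding vv F by (rule RHS)
  show ?thesis unfolding dX LHS RHS2
  proof
    assume "\<exists>g. ar g \<and> dm g = prd X C' \<and> cd g = B \<and>
     lq (prd X C') (PMD (pr (p \<cdot> p1 X C') (p2 X C')) c) (PMD (pr (p1 X C') g) a)"
    then obtain g where g: "ar g" "dm g = prd X C'" "cd g = B"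
      "lq (prd X C') (PMD (pr (p \<cdot> p1 X C') (p2 X C')) c) (PMD (pr (p1 X C') g) a)" by blast
    let ?jj = "pr (s \<cdot> pr (p1 A C' \<cdot> p1 (prd A C') K) (p2 (prd A C') K)) (p2 A C' \<cdot> p1 (prd A C') K)"
    have "\<exists>k. ar k \<and> dm k = prd A C' \<and> cd k = E \<and> V \<cdot> pr (k \<cdot> p1 (prd A C') K) (p2 (prd A C') K) = g \<cdot> ?jj"
      by (rule etr) (use g cb o in simp_all)
    then obtain k where k: "ar k" "dm k = prd A C'" "cd k = E" "V \<cdot> pr (k \<cdot> p1 (prd A C') K) (p2 (prd A C') K) = g \<cdot> ?jj"
      by blast
    have "lq (prd (prd A C') K) (PMD ?jj (PMD (pr (p \<cdot> p1 X C') (p2 X C')) c)) (PMD ?jj (PMD (pr (p1 X C') g) a))"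
      by (rule lq_mono[OF _ _ _ _ _ g(4)]) (use g cb o in simp_all)
    hence "lq (prd (prd A C') K) (PMD (p1 (prd A C') K) c) (PMD (pr (p1 X C') g \<cdot> ?jj) a)"
      using g cb o ps by simp
    moreover have "pr (p1 X C') g \<cdot> ?jj = ?t \<cdot> pr (pr (p1 A C') k \<cdot> p1 (prd A C') K) (p2 (prd A C') K)"
      using g cb o ep k by simp
    ultimately show "\<exists>k. ar k \<and> dm k = prd A C' \<and> cd k = E \<and>
     lq (prd (prd A C') K) (PMD (p1 (prd A C') K) c) (PMD (pr (pr (p1 A C') k \<cdot> p1 (prd A C') K) (p2 (prd A C') K)) (PMD ?t a))"
      using k cb o ep by (intro exI[of _ k]) simp
  next
    assume "\<exists>k. ar k \<and> dm k = prd A C' \<and> cd k = E \<and>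
     lq (prd (prd A C') K) (PMD (p1 (prd A C') K) c) (PMD (pr (pr (p1 A C') k \<cdot> p1 (prd A C') K) (p2 (prd A C') K)) (PMD ?t a))"
    then obtain k where k: "ar k" "dm k = prd A C'" "cd k = E" 
      "lq (prd (prd A C') K) (PMD (p1 (prd A C') K) c) (PMD (pr (pr (p1 A C') k \<cdot> p1 (prd A C') K) (p2 (prd A C') K)) (PMD ?t a))"
      by blast
    let ?jj = "pr (pr (p \<cdot> p1 X C') (p2 X C')) (q \<cdot> p1 X C')"
    let ?g = "V \<cdot> pr (k \<cdot> pr (p \<cdot> p1 X C') (p2 X C')) (q \<cdot> p1 X C')"
    have "lq (prd X C') (PMD ?jj (PMD (p1 (prd A C') K) c))
       (PMD ?jj (PMD (pr (pr (p1 A C') k \<cdot> p1 (prd A C') K) (p2 (prd A C') K)) (PMD ?t a)))"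
      by (rule lq_mono[OF _ _ _ _ _ k(4)]) (use k cb o ep in simp_all)
    hence "lq (prd X C') (PMD (pr (p \<cdot> p1 X C') (p2 X C')) c) (PMD (?t \<cdot> pr (pr (p1 A C') k \<cdot> p1 (prd A C') K) (p2 (prd A C') K) \<cdot> ?jj) a)"
      using k cb o ep by simp
    moreover have "?t \<cdot> pr (pr (p1 A C') k \<cdot> p1 (prd A C') K) (p2 (prd A C') K) \<cdot> ?jj = pr (p1 X C') ?g"
      using k cb o ep sp by simp
    ultimately show "\<exists>g. ar g \<and> dm g = prd X C' \<and> cd g = B \<and>
     lq (prd X C') (PMD (pr (p \<cdot> p1 X C') (p2 X C')) c) (PMD (pr (p1 X C') g) a)"
      using k cb o ep by (intro exI[of _ ?g]) simp
  qed
qed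


lemma Fall_BC: assumes cs: "cstr p K q s" and cs': "cstr p' K' q' s'"
  and f: "ar f" "dm f = cd p'" "cd f = cd p" and f': "ar f'" "dm f' = dm p'" "cd f' = dm p"
  and pb: "pullback C p' f' p f" and u: "u \<in> T (dm p)"
  shows "lx (cd p') (Fall p' K' s' (rdx f' u)) (rdx f (Fall p K s u))"
    "lx (cd p') (rdx f (Fall p K s u)) (Fall p' K' s' (rdx f' u))"
proof -
  obtain B a where uu: "u = (B,a)" by (cases u) auto
  define X where "X = dm p"
  define A where "A = cd p"
  define X' where "X' = dm p'"
  define A' where "A' = cd p'"
  have dX: "dm p = X" "cd p = A" "dm p' = X'" "cd p' = A'" using X_def A_def X'_def A'_def by auto
  note cb = cs_basic[OF cs, folded X_def A_def] dX
  note ps = cs_ps[OF cs, folded X_def A_def]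
  note sp = cs_sp[OF cs, folded X_def A_def]
  note cb' = cs_basic[OF cs', folded X'_def A'_def]
  note ps' = cs_ps[OF cs', folded X'_def A'_def]
  note sp' = cs_sp[OF cs', folded X'_def A'_def]
  note ff = f[folded X_def A_def X'_def A'_def] f'[folded X_def A_def X'_def A'_def]
  have comm: "p \<cdot> f' = f \<cdot> p'" by (rule pb_comm[OF pb])
  have o: "ob B" "a \<in> POD (prd X B)" using u uu X_def by auto
  have oK: "ob K" "ob K'" using cb cb' by simp_all
  define E where "E = expE K B"
  define V where "V = expV K B"
  note ep = exp_props(1)[OF expo oK(1) o(1), folded E_def V_def]
  note etr = exp_props(2)[OF expo oK(1) o(1), folded E_def V_def]
  define E' where "E' = expE K' B"
  define V' where "V' = expV K' B"
  note ep' = exp_props(1)[OF expo oK(2) o(1), folded E'_def V'_def]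
  note etr' = exp_props(2)[OF expo oK(2) o(1), folded E'_def V'_def]
  let ?t = "pr (s \<cdot> pr (p1 A E \<cdot> p1 (prd A E) K) (p2 (prd A E) K)) (V \<cdot> pr (p2 A E \<cdot> p1 (prd A E) K) (p2 (prd A E) K))"
  let ?t' = "pr (s' \<cdot> pr (p1 A' E' \<cdot> p1 (prd A' E') K') (p2 (prd A' E') K')) (V' \<cdot> pr (p2 A' E' \<cdot> p1 (prd A' E') K') (p2 (prd A' E') K'))"
  let ?tau1 = "pr (f' \<cdot> p1 X' B) (p2 X' B) \<cdot> ?t'"
  let ?tau2 = "?t \<cdot> pr (pr (f \<cdot> p1 A' E) (p2 A' E) \<cdot> p1 (prd A' E) K) (p2 (prd A' E) K)"
  have L1: "Fall p' K' s' (rdx f' u) = (E', Fa (prd A' E') K' (PMD ?tau1 a))"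
    unfolding Fall_def tt_def uu rdx_simp fst_conv snd_conv dX E'_def[symmetric] V'_def[symmetric]
    using cb cb' ff o ep' by simp
  have "PMD (pr (f \<cdot> p1 A' E) (p2 A' E)) (Fa (prd A E) K (PMD ?t a)) =
        Fa (prd A' E) K (PMD (pr (pr (f \<cdot> p1 A' E) (p2 A' E) \<cdot> p1 (prd A' E) K) (p2 (prd A' E) K)) (PMD ?t a))"
    by (rule Fa_BC[symmetric]) (use cb cb' ff o ep in simp_all)
  hence R1: "rdx f (Fall p K s u) = (E, Fa (prd A' E) K (PMD ?tau2 a))"
    unfolding Fall_def tt_def uu E_def[symmetric] V_def[symmetric] rdx_simp fst_conv snd_conv dX
    using cb cb' ff o ep by simp
  show "lx (cd p') (Fall p' K' s' (rdx f' u)) (rdx f (Fall p K s u))"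
  proof -
    let ?Z = "prd (prd A' E') K"
    let ?h = "s \<cdot> pr (f \<cdot> p1 A' E' \<cdot> p1 (prd A' E') K) (p2 (prd A' E') K)"
    have "\<exists>k. ar k \<and> dm k = ?Z \<and> cd k = dm p' \<and> p' \<cdot> k = p1 A' E' \<cdot> p1 (prd A' E') K \<and> f' \<cdot> k = ?h"
      by (rule pb_use[OF pb]) (use cb cb' ff o ps ep' in simp_all)
    then obtain m where m: "ar m" "dm m = ?Z" "cd m = X'" "p' \<cdot> m = p1 A' E' \<cdot> p1 (prd A' E') K" "f' \<cdot> m = ?h"
      unfolding dX by blast
    have sm: "s' \<cdot> pr (p1 A' E' \<cdot> p1 (prd A' E') K) (q' \<cdot> m) = m"
      using sp'[of m] m cb' by simp
    let ?n = "q' \<cdot> m"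
    let ?G = "V' \<cdot> pr (p2 A' E' \<cdot> p1 (prd A' E') K) ?n"
    have "\<exists>k. ar k \<and> dm k = prd A' E' \<and> cd k = E \<and> V \<cdot> pr (k \<cdot> p1 (prd A' E') K) (p2 (prd A' E') K) = ?G"
      by (rule etr) (use cb cb' ff o m ep ep' in simp_all)
    then obtain k where k: "ar k" "dm k = prd A' E'" "cd k = E" "V \<cdot> pr (k \<cdot> p1 (prd A' E') K) (p2 (prd A' E') K) = ?G"
      by blast
    have eq: "?tau1 \<cdot> pr (p1 (prd A' E') K) ?n = ?tau2 \<cdot> pr (pr (p1 A' E') k \<cdot> p1 (prd A' E') K) (p2 (prd A' E') K)"
      using cb cb' ff o m ep ep' k sm by simp
    show ?thesis unfolding L1 R1 dX
      by (rule Fa_lx[OF _ _ _ _ _ o(2) _ _ _ _ _ _ k(1-3) _ _ _ eq]) (use cb cb' ff o m ep ep' in simp_all)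
  qed
  show "lx (cd p') (rdx f (Fall p K s u)) (Fall p' K' s' (rdx f' u))"
  proof -
    let ?w = "s' \<cdot> pr (p1 A' E \<cdot> p1 (prd A' E) K') (p2 (prd A' E) K')"
    have pw: "p' \<cdot> ?w = p1 A' E \<cdot> p1 (prd A' E) K'" using ps' cb' o ep by simp
    have key: "s \<cdot> pr (f \<cdot> (p' \<cdot> ?w)) (q \<cdot> (f' \<cdot> ?w)) = f' \<cdot> ?w"
      by (rule key_sq[OF cs f(1,3) f'(1,3) comm]) (use cb cb' ff o ep in simp_all)
    hence key2: "s \<cdot> pr (f \<cdot> p1 A' E \<cdot> p1 (prd A' E) K') (q \<cdot> (f' \<cdot> ?w)) = f' \<cdot> ?w" unfolding pw .
    let ?n = "q \<cdot> (f' \<cdot> ?w)"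
    let ?G = "V \<cdot> pr (p2 A' E \<cdot> p1 (prd A' E) K') ?n"
    have "\<exists>k. ar k \<and> dm k = prd A' E \<and> cd k = E' \<and> V' \<cdot> pr (k \<cdot> p1 (prd A' E) K') (p2 (prd A' E) K') = ?G"
      by (rule etr') (use cb cb' ff o ep ep' in simp_all)
    then obtain k where k: "ar k" "dm k = prd A' E" "cd k = E'" "V' \<cdot> pr (k \<cdot> p1 (prd A' E) K') (p2 (prd A' E) K') = ?G"
      by blast
    have eq: "?tau2 \<cdot> pr (p1 (prd A' E) K') ?n = ?tau1 \<cdot> pr (pr (p1 A' E) k \<cdot> p1 (prd A' E) K') (p2 (prd A' E) K')"
      using cb cb' ff o ep ep' k key2 by simp
    show ?thesis unfolding L1 R1 dX
      by (rule Fa_lx[OF _ _ _ _ _ o(2) _ _ _ _ _ _ k(1-3) _ _ _ eq]) (use cb cb' ff o ep ep' in simp_all)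
  qed
qed

end

context doct begin

definition csel where "csel p = (SOME x. cstr p (fst x) (fst (snd x)) (snd (snd x)))"

lemma csel: assumes "is_proj C Pr p X A"
  shows "cstr p (fst (csel p)) (fst (snd (csel p))) (snd (snd (csel p)))"
proof -
  obtain K q s where "cstr p K q s" using cstr_exists[OF assms] by blast
  hence "\<exists>x. cstr p (fst x) (fst (snd x)) (snd (snd x))" by (intro exI[of _ "(K,q,s)"]) simp
  thus ?thesis unfolding csel_def by (rule someI_ex)
qed

definition Lex where "Lex p S = (\<Union>w\<in>S. cls (cd p) (Eex p (fst (csel p)) (snd (snd (csel p))) w))"

lemma Lex_props: assumes "is_proj C Pr p X A"
  shows "is_left_adj PX p X A (Lex p)" "\<And>u. u \<in> T X \<Longrightarrow> Lex p (cls X u) = cls A (Eex p (fst (csel p)) (snd (snd (csel p))) u)"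
proof -
  note cs = csel[OF assms]
  note pi = cstr_exists[OF assms]
  have ET: "\<And>u. u \<in> T X \<Longrightarrow> Eex p (fst (csel p)) (snd (snd (csel p))) u \<in> T A"
    using Eex_T[OF cs] pi by auto
  have adj: "\<And>u v. u \<in> T X \<Longrightarrow> v \<in> T A \<Longrightarrow> lx A (Eex p (fst (csel p)) (snd (snd (csel p))) u) v \<longleftrightarrow> lx X u (rdx p v)"
    using Eex_adj[OF cs] pi by auto
  note LL = lift_left[of X A p, OF _ _ _ _ _ ET adj]
  show "is_left_adj PX p X A (Lex p)" unfolding Lex_def using LL(2) pi by auto
  show "\<And>u. u \<in> T X \<Longrightarrow> Lex p (cls X u) = cls A (Eex p (fst (csel p)) (snd (snd (csel p))) u)"
    unfolding Lex_def using LL(1) pi by auto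
qed

lemma Pex_existential: "existential C Pr PX"
  unfolding existential_def
proof (intro exI[of _ Lex] conjI allI impI ballI)
  fix p X A assume "is_proj C Pr p X A" thus "is_left_adj PX p X A (Lex p)" by (rule Lex_props(1))
next
  fix p X A p' X' A' f f' x
  assume a: "is_proj C Pr p X A \<and> is_proj C Pr p' X' A' \<and> f \<in> Hom C A' A \<and> f' \<in> Hom C X' X \<and> pullback C p' f' p f"
    and x: "x \<in> PO PX X"
  have pi: "is_proj C Pr p X A" and pi': "is_proj C Pr p' X' A'" using a by auto
  note P = cstr_exists[OF pi] and P' = cstr_exists[OF pi']
  have f: "ar f" "dm f = A'" "cd f = A" "ar f'" "dm f' = X'" "cd f' = X" using a unfolding Hom_def by auto
  from x obtain u where u: "u \<in> T X" "x = cls X u" unfolding Pex_PO by auto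
  have ru: "rdx f' u \<in> T X'" using rdx_T[of f' u] f u by simp
  have "Lex p' (PM PX f' x) = cls A' (Eex p' (fst (csel p')) (snd (snd (csel p'))) (rdx f' u))"
    using PM_cls[of f' u] f u Lex_props(2)[OF pi' ru] by simp
  moreover have "PM PX f (Lex p x) = cls A' (rdx f (Eex p (fst (csel p)) (snd (snd (csel p))) u))"
    using Lex_props(2)[OF pi u(1)] u(2) PM_cls[of f] f Eex_T[OF csel[OF pi]] P u by simp
  moreover have "cls A' (Eex p' (fst (csel p')) (snd (snd (csel p'))) (rdx f' u)) =
     cls A' (rdx f (Eex p (fst (csel p)) (snd (snd (csel p))) u))"
  proof (rule cls_eq)
    show "ob A'" using P' by simp
    show "Eex p' (fst (csel p')) (snd (snd (csel p'))) (rdx f' u) \<in> T A'"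
      using Eex_T[OF csel[OF pi'] ] ru P' by simp
    show "rdx f (Eex p (fst (csel p)) (snd (snd (csel p))) u) \<in> T A'"
      using rdx_T[of f] Eex_T[OF csel[OF pi]] u P f by simp
    show "lx A' (Eex p' (fst (csel p')) (snd (snd (csel p'))) (rdx f' u)) (rdx f (Eex p (fst (csel p)) (snd (snd (csel p))) u))"
      using Eex_BC(1)[OF csel[OF pi] csel[OF pi'], of f f' u] a P P' f u by simp
    show "lx A' (rdx f (Eex p (fst (csel p)) (snd (snd (csel p))) u)) (Eex p' (fst (csel p')) (snd (snd (csel p'))) (rdx f' u))"
      using Eex_BC(2)[OF csel[OF pi] csel[OF pi'], of f f' u] a P P' f u by simp
  qed
  ultimately show "Lex p' (PM PX f' x) = PM PX f (Lex p x)" by simp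
qed

end

context udoct begin

definition Rex where "Rex p S = (\<Union>w\<in>S. cls (cd p) (Fall p (fst (csel p)) (snd (snd (csel p))) w))"

lemma Rex_props: assumes "is_proj C Pr p X A"
  shows "is_right_adj PX p X A (Rex p)" "\<And>u. u \<in> T X \<Longrightarrow> Rex p (cls X u) = cls A (Fall p (fst (csel p)) (snd (snd (csel p))) u)"
proof -
  note cs = csel[OF assms]
  note pi = cstr_exists[OF assms]
  have ET: "\<And>u. u \<in> T X \<Longrightarrow> Fall p (fst (csel p)) (snd (snd (csel p))) u \<in> T A"
    using Fall_T[OF cs] pi by auto
  have adj: "\<And>u v. u \<in> T X \<Longrightarrow> v \<in> T A \<Longrightarrow> lx X (rdx p v) u \<longleftrightarrow> lx A v (Fall p (fst (csel p)) (snd (snd (csel p))) u)"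
    using Fall_adj[OF cs] pi by auto
  note LL = lift_right[of X A p, OF _ _ _ _ _ ET adj]
  show "is_right_adj PX p X A (Rex p)" unfolding Rex_def using LL(2) pi by auto
  show "\<And>u. u \<in> T X \<Longrightarrow> Rex p (cls X u) = cls A (Fall p (fst (csel p)) (snd (snd (csel p))) u)"
    unfolding Rex_def using LL(1) pi by auto
qed

lemma Pex_universal: "universal C Pr PX"
  unfolding universal_def
proof (intro exI[of _ Rex] conjI allI impI ballI)
  fix p X A assume "is_proj C Pr p X A" thus "is_right_adj PX p X A (Rex p)" by (rule Rex_props(1))
next
  fix p X A p' X' A' f f' x
  assume a: "is_proj C Pr p X A \<and> is_proj C Pr p' X' A' \<and> f \<in> Hom C A' A \<and> f' \<in> Hom C X' X \<and> pullback C p' f' p f"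
    and x: "x \<in> PO PX X"
  have pi: "is_proj C Pr p X A" and pi': "is_proj C Pr p' X' A'" using a by auto
  note P = cstr_exists[OF pi] and P' = cstr_exists[OF pi']
  have f: "ar f" "dm f = A'" "cd f = A" "ar f'" "dm f' = X'" "cd f' = X" using a unfolding Hom_def by auto
  from x obtain u where u: "u \<in> T X" "x = cls X u" unfolding Pex_PO by auto
  have ru: "rdx f' u \<in> T X'" using rdx_T[of f' u] f u by simp
  have "Rex p' (PM PX f' x) = cls A' (Fall p' (fst (csel p')) (snd (snd (csel p'))) (rdx f' u))"
    using PM_cls[of f' u] f u Rex_props(2)[OF pi' ru] by simp
  moreover have "PM PX f (Rex p x) = cls A' (rdx f (Fall p (fst (csel p)) (snd (snd (csel p))) u))"
    using Rex_props(2)[OF pi u(1)] u(2) PM_cls[of f] f Fall_T[OF csel[OF pi]] P u by simp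
  moreover have "cls A' (Fall p' (fst (csel p')) (snd (snd (csel p'))) (rdx f' u)) =
     cls A' (rdx f (Fall p (fst (csel p)) (snd (snd (csel p))) u))"
  proof (rule cls_eq)
    show "ob A'" using P' by simp
    show "Fall p' (fst (csel p')) (snd (snd (csel p'))) (rdx f' u) \<in> T A'"
      using Fall_T[OF csel[OF pi'] ] ru P' by simp
    show "rdx f (Fall p (fst (csel p)) (snd (snd (csel p))) u) \<in> T A'"
      using rdx_T[of f] Fall_T[OF csel[OF pi]] u P f by simp
    show "lx A' (Fall p' (fst (csel p')) (snd (snd (csel p'))) (rdx f' u)) (rdx f (Fall p (fst (csel p)) (snd (snd (csel p))) u))"
      using Fall_BC(1)[OF csel[OF pi] csel[OF pi'], of f f' u] a P P' f u by simp
    show "lx A' (rdx f (Fall p (fst (csel p)) (snd (snd (csel p))) u)) (Fall p' (fst (csel p')) (snd (snd (csel p'))) (rdx f' u))"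
      using Fall_BC(2)[OF csel[OF pi] csel[OF pi'], of f f' u] a P P' f u by simp
  qed
  ultimately show "Rex p' (PM PX f' x) = PM PX f (Rex p x)" by simp
qed

end

theorem theorem6:
  assumes "category C"
    and "finite_products C Pr"
    and "doctrine C D"
    and "universal C Pr D"
    and "has_exponents C Pr"
  shows "existential C Pr (Pex C Pr D) \<and> universal C Pr (Pex C Pr D)"
proof -
  interpret doct C Pr D using assms(1-3) by (unfold_locales) auto
  obtain R where R: "(\<forall>p X A. is_proj C Pr p X A \<longrightarrow> is_right_adj D p X A (R p))"
    "(\<forall>p X A p' X' A' f f'.
           is_proj C Pr p X A \<and> is_proj C Pr p' X' A' \<and>
           f \<in> Hom C A' A \<and> f' \<in> Hom C X' X \<and> pullback C p' f' p f \<longrightarrow>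
           (\<forall>x\<in>PO D X. R p' (PM D f' x) = PM D f (R p x)))"
    using assms(4) unfolding universal_def by blast
  interpret udoct C Pr D R
    by (unfold_locales) (use R assms(5) in blast)+
  show ?thesis using Pex_existential Pex_universal by simp
qed

end
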